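(* Let $0<s_1<s_2<1$, $2s_1<d<\frac{2s_1s_2}{s_2-s_1}$, and suppose $g$ satisfies $(G_1)$–$(G_2)$ and $V$ satisfies $(V_2)$. Then for every $a>0$ there exists $\delta_a>0$ such that $$\inf\{t>0:\ \exists u\in S_a \text{ with } |\nabla_{s_1}u|_2^2+|\nabla_{s_2}u|_2^2=1 \text{ and } t*u\in\mathcal{P}_a\}\ge\delta_a.$$ Consequently, $\inf_{u\in\mathcal{P}_a}\big(|\nabla_{s_1}u|_2^2+|\nabla_{s_2}u|_2^2\big)\ge\delta_a^2>0$.
   Context: For $s\in(0,1)$, $|\nabla_s u|_2^2=\int_{\mathbb{R}^d\times\mathbb{R}^d}\frac{|u(x)-u(y)|^2}{|x-y|^{d+2s}}dx\,dy$; $|\cdot|_p$ is the $L^p(\mathbb{R}^d)$ norm; $H^{s_1,s_2}(\mathbb{R}^d)=\{u\in L^2(\mathbb{R}^d):|\nabla_{s_1}u|_2<\infty,\ |\nabla_{s_2}u|_2<\infty\}$. $S_a=\{u\in H^{s_1,s_2}(\mathbb{R}^d):|u|_2^2=a\}$; $(t*u)(x)=t^{d/2}u(tx)$ for $t>0$. $g:\mathbb{R}\to\mathbb{R}$, $G(s)=\int_0^sg$, $\widetilde G(s)=\frac12g(s)s-G(s)$. $(G_1)$: $g$ continuous, odd. $(G_2)$: there exist $\alpha,\beta$ with $2+\frac{4s_2}{d}<\alpha<\beta<\frac{2d}{d-2s_1}$ and $\alpha G(s)\le g(s)s\le\beta G(s)$ for all $s$. $V:\mathbb{R}^d\to\mathbb{R}$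 is a potential; $\sigma_1\in[0,\frac{d(\alpha-2)-4}{d(\alpha-2)}]$ is a fixed constant (the one associated with $V$ in the paper's assumption $(V_1)$). $(V_2)$: $\nabla V(x)$ exists for a.e. $x$; with $W(x)=\frac12\langle\nabla V(x),x\rangle$, $\lim_{|x|\to\infty}W(x)=0$ and there is $\sigma_2$ with $0<\sigma_2<\min\{s_1-\frac{(\beta-2)d}{2\beta},\frac{d(\alpha-2)(1-\sigma_1)}{4}-s_2\}$ and $|\int W u^2dx|\le\sigma_2(|\nabla_{s_1}u|_2^2+|\nabla_{s_2}u|_2^2)$ for all $u\in H^{s_1,s_2}(\mathbb{R}^d)$. $P(u)=s_1|\nabla_{s_1}u|_2^2+s_2|\nabla_{s_2}u|_2^2-\frac12\int_{\mathbb{R}^d}\langle\nabla V(x),x\rangle u^2dx-d\int_{\mathbb{R}^d}\widetilde G(u)dx$; $\mathcal{P}_a=\{u\in S_a:P(u)=0\}$. *)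

theory Defs
  imports "HOL-Analysis.Analysis"
begin

definition gagliardo_nn :: "real \<Rightarrow> ('a::euclidean_space \<Rightarrow> real) \<Rightarrow> ennreal" where
  "gagliardo_nn s u =
     (\<integral>\<^sup>+ x. (\<integral>\<^sup>+ y. ennreal ((u x - u y)\<^sup>2 / (norm (x - y)) powr (real DIM('a) + 2 * s)) \<partial>lborel) \<partial>lborel)"

definition gagliardo :: "real \<Rightarrow> ('a::euclidean_space \<Rightarrow> real) \<Rightarrow> real" where
  "gagliardo s u = enn2real (gagliardo_nn s u)"

definition L2sq :: "('a::euclidean_space \<Rightarrow> real) \<Rightarrow> real" where
  "L2sq u = (\<integral> x. (u x)\<^sup>2 \<partial>lborel)"

definition in_H :: "real \<Rightarrow> real \<Rightarrow> ('a::euclidean_space \<Rightarrow> real) \<Rightarrow> bool" where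
  "in_H s1 s2 u \<longleftrightarrow> u \<in> borel_measurable lborel \<and> integrable lborel (\<lambda>x. (u x)\<^sup>2)
      \<and> gagliardo_nn s1 u < \<infinity> \<and> gagliardo_nn s2 u < \<infinity>"

definition S_set :: "real \<Rightarrow> real \<Rightarrow> real \<Rightarrow> ('a::euclidean_space \<Rightarrow> real) set" where
  "S_set s1 s2 a = {u. in_H s1 s2 u \<and> L2sq u = a}"

definition dil :: "real \<Rightarrow> ('a::euclidean_space \<Rightarrow> real) \<Rightarrow> ('a \<Rightarrow> real)" where
  "dil t u = (\<lambda>x. t powr (real DIM('a) / 2) * u (t *\<^sub>R x))"

definition Gprim :: "(real \<Rightarrow> real) \<Rightarrow> real \<Rightarrow> real" where
  "Gprim g s = (LBINT t=0..s. g t)"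

definition Gtil :: "(real \<Rightarrow> real) \<Rightarrow> real \<Rightarrow> real" where
  "Gtil g s = 1/2 * g s * s - Gprim g s"

text \<open>P(u), with gradV the (a.e.) gradient of V.\<close>
definition Pfun :: "real \<Rightarrow> real \<Rightarrow> ('a::euclidean_space \<Rightarrow> 'a) \<Rightarrow> (real \<Rightarrow> real) \<Rightarrow> ('a \<Rightarrow> real) \<Rightarrow> real" where
  "Pfun s1 s2 gradV g u =
     s1 * gagliardo s1 u + s2 * gagliardo s2 u
     - 1/2 * (\<integral> x. (gradV x \<bullet> x) * (u x)\<^sup>2 \<partial>lborel)
     - real DIM('a) * (\<integral> x. Gtil g (u x) \<partial>lborel)"

definition P_set :: "real \<Rightarrow> real \<Rightarrow> ('a::euclidean_space \<Rightarrow> 'a) \<Rightarrow> (real \<Rightarrow> real) \<Rightarrow> real \<Rightarrow> ('a \<Rightarrow> real) set" where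
  "P_set s1 s2 gradV g a = {u \<in> S_set s1 s2 a. Pfun s1 s2 gradV g u = 0}"

end

theory Submission
  imports Defs
begin




lemma ratio_incr:
  fixes F f :: "real \<Rightarrow> real" and p :: real
  assumes D: "\<And>x. (F has_real_derivative f x) (at x)"
    and H: "\<And>x. x > 0 \<Longrightarrow> p * F x \<le> f x * x"
    and xy: "0 < x" "x \<le> y"
  shows "F x / x powr p \<le> F y / y powr p"
proof (rule DERIV_nonneg_imp_increasing_open[OF xy(2)])
  have der: "((\<lambda>x. F x / x powr p) has_real_derivative
          (f z * z powr p - F z * (p * z powr (p - 1))) / (z powr p * z powr p)) (at z)" if "z > 0" for z
    using that by (auto intro!: derivative_eq_intros D)
  have nn: "0 \<le> (f z * z powr p - F z * (p * z powr (p - 1))) / (z powr p * z powr p)" if "z > 0" for z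
  proof -
    have "f z * z powr p - F z * (p * z powr (p - 1)) = z powr (p - 1) * (f z * z - p * F z)"
      using that by (simp add: powr_diff algebra_simps powr_minus divide_simps)
    also have "\<dots> \<ge> 0" using H[OF that] that by simp
    finally show ?thesis by simp
  qed
  show "\<exists>y. ((\<lambda>x. F x / x powr p) has_real_derivative y) (at z) \<and> 0 \<le> y" if "x < z" "z < y" for z
    using der nn that xy by (meson less_trans)
  show "continuous_on {x..y} (\<lambda>x. F x / x powr p)"
    using der xy by (intro continuous_at_imp_continuous_on ballI DERIV_isCont) (auto intro: der)
qed

lemma ratio_decr:
  fixes F f :: "real \<Rightarrow> real" and p :: real
  assumes D: "\<And>x. (F has_real_derivative f x) (at x)"
    and H: "\<And>x. x > 0 \<Longrightarrow> f x * x \<le> p * F x"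
    and xy: "0 < x" "x \<le> y"
  shows "F y / y powr p \<le> F x / x powr p"
proof -
  have "(-F x) / x powr p \<le> (-F y) / y powr p"
    by (rule ratio_incr[where f="\<lambda>x. - f x"]) (auto intro!: derivative_eq_intros D H xy)
  then show ?thesis by (simp only: minus_divide_left)
qed

lemma Gprim_deriv:
  assumes cont: "continuous_on UNIV g"
  shows "(Gprim g has_real_derivative g x) (at x)"
proof -
  have "((\<lambda>u. LBINT y=0..u. g y) has_vector_derivative g x) (at x within {-\<bar>x\<bar>-1..\<bar>x\<bar>+1})"
    using interval_integral_FTC2[of "-\<bar>x\<bar>-1" 0 "\<bar>x\<bar>+1" g x] continuous_on_subset[OF cont]
    by (simp add: zero_ereal_def)
  then have "((\<lambda>u. LBINT y=0..u. g y) has_vector_derivative g x) (at x)"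
    by (subst (asm) at_within_Icc_at) auto
  then show ?thesis
    unfolding Gprim_def[abs_def] by (simp add: has_real_derivative_iff_has_vector_derivative)
qed

lemma Gprim_0: "Gprim g 0 = 0"
  by (simp add: Gprim_def zero_ereal_def)

lemma G_bounds:
  assumes cont: "continuous_on UNIV g"
    and G2: "\<And>s. \<alpha> * Gprim g s \<le> g s * s \<and> g s * s \<le> \<beta> * Gprim g s"
    and ab: "\<alpha> < \<beta>"
  shows G_nonneg: "\<And>s. 0 \<le> Gprim g s"
    and Gtil_le: "\<And>s. Gtil g s \<le> (\<beta>/2 - 1) * Gprim g s"
    and Gtil_nonneg: "\<And>s. 2 \<le> \<alpha> \<Longrightarrow> 0 \<le> Gtil g s"
    and G_le: "\<And>s. Gprim g s \<le> (Gprim g 1 + Gprim g (-1)) * (\<bar>s\<bar> powr \<alpha> + \<bar>s\<bar> powr \<beta>)"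
proof -
  fix s
  have "(\<beta> - \<alpha>) * Gprim g s \<ge> 0" using G2[of s] by (simp add: algebra_simps)
  then show nn: "0 \<le> Gprim g s" using ab by (simp add: zero_le_mult_iff)
  show "Gtil g s \<le> (\<beta>/2 - 1) * Gprim g s"
    using G2[of s] unfolding Gtil_def by (simp add: algebra_simps)
  show "2 \<le> \<alpha> \<Longrightarrow> 0 \<le> Gtil g s"
  proof -
    assume a2: "2 \<le> \<alpha>"
    have "2 * Gprim g s \<le> \<alpha> * Gprim g s" using a2 nn by (simp add: mult_right_mono)
    then show ?thesis using G2[of s] unfolding Gtil_def by (simp add: algebra_simps)
  qed
next
  fix s
  have nn: "\<And>s. 0 \<le> Gprim g s"
  proof -
    fix s
    have "(\<beta> - \<alpha>) * Gprim g s \<ge> 0" using G2[of s] by (simp add: algebra_simps)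
    then show "0 \<le> Gprim g s" using ab by (simp add: zero_le_mult_iff)
  qed
  define F2 where "F2 = (\<lambda>x. Gprim g (- x))"
  have D1: "\<And>x. (Gprim g has_real_derivative g x) (at x)" using Gprim_deriv[OF cont] .
  have D2: "\<And>x. (F2 has_real_derivative - g (- x)) (at x)"
  proof -
    fix x
    have "((\<lambda>x. Gprim g (-x)) has_real_derivative g (-x) * (-1)) (at x)"
      by (rule DERIV_chain2[OF D1]) (auto intro!: derivative_eq_intros)
    then show "(F2 has_real_derivative - g (- x)) (at x)" by (simp add: F2_def)
  qed
  have H2: "\<alpha> * F2 x \<le> - g (- x) * x \<and> - g (- x) * x \<le> \<beta> * F2 x" for x
    using G2[of "-x"] unfolding F2_def by simp
  let ?M = "Gprim g 1 + Gprim g (-1)"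
  have M1: "Gprim g 1 \<le> ?M" and M2: "Gprim g (-1) \<le> ?M" using nn[of 1] nn[of "-1"] by auto
  have pa: "0 \<le> \<bar>s\<bar> powr \<alpha>" "0 \<le> \<bar>s\<bar> powr \<beta>" by auto
  have key: "F x \<le> F 1 * (x powr \<alpha> + x powr \<beta>)"
    if D: "\<And>x. (F has_real_derivative f x) (at x)"
      and H: "\<And>x. \<alpha> * F x \<le> f x * x \<and> f x * x \<le> \<beta> * F x"
      and Fnn: "\<And>x. 0 \<le> F x" and x: "0 < x" for F f :: "real \<Rightarrow> real" and x :: real
  proof (cases "x \<le> 1")
    case True
    have "F x / x powr \<alpha> \<le> F 1 / 1 powr \<alpha>"
      by (rule ratio_incr[OF D]) (use H x True in auto)
    then have "F x \<le> F 1 * x powr \<alpha>" using x by (simp add: divide_simps)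
    also have "\<dots> \<le> F 1 * (x powr \<alpha> + x powr \<beta>)" using Fnn[of 1] by (intro mult_left_mono) auto
    finally show ?thesis .
  next
    case False
    have "F x / x powr \<beta> \<le> F 1 / 1 powr \<beta>"
      by (rule ratio_decr[OF D]) (use H x False in auto)
    then have "F x \<le> F 1 * x powr \<beta>" using x by (simp add: divide_simps)
    also have "\<dots> \<le> F 1 * (x powr \<alpha> + x powr \<beta>)" using Fnn[of 1] by (intro mult_left_mono) auto
    finally show ?thesis .
  qed
  show "Gprim g s \<le> ?M * (\<bar>s\<bar> powr \<alpha> + \<bar>s\<bar> powr \<beta>)"
  proof (cases "s = 0")
    case True then show ?thesis by (simp add: Gprim_0)
  next
    case False
    show ?thesis
    proof (cases "s > 0")
      case True
      have "Gprim g s \<le> Gprim g 1 * (s powr \<alpha> + s powr \<beta>)"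
        by (rule key[OF D1 G2 nn True])
      also have "\<dots> \<le> ?M * (s powr \<alpha> + s powr \<beta>)"
        using M1 by (intro mult_right_mono) auto
      finally show ?thesis using True by simp
    next
      case False
      then have sp: "- s > 0" using \<open>s \<noteq> 0\<close> by simp
      have "F2 (- s) \<le> F2 1 * ((- s) powr \<alpha> + (- s) powr \<beta>)"
        by (rule key[OF D2 H2 _ sp]) (simp add: F2_def nn)
      also have "\<dots> \<le> ?M * ((- s) powr \<alpha> + (- s) powr \<beta>)"
        using M2 unfolding F2_def by (intro mult_right_mono) auto
      finally show ?thesis using sp by (simp add: F2_def)
    qed
  qed
qed



lemma alg1:
  fixes \<mu> \<omega> lam P Q A :: real
  assumes "\<mu> > 0" "\<omega> > 0" "lam > 0" "P > 0" "Q > 0"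
  shows "A / ((lam / 2)\<^sup>2 / (2 * \<mu> / \<omega> * (P * Q)) * \<mu>) = 8 / \<omega> * P * A * (1 / lam\<^sup>2) * Q"
  using assms by (simp add: field_simps power2_eq_square)

lemma dist_ineq:
  fixes u :: "'a::euclidean_space \<Rightarrow> real" and s lam :: real
  assumes u[measurable]: "u \<in> borel_measurable lborel" and s: "0 < s"
    and fin: "\<And>l. l > 0 \<Longrightarrow> emeasure lborel {x. l < \<bar>u x\<bar>} < \<infinity>"
    and gfin: "gagliardo_nn s u < \<infinity>"
    and lam: "lam > 0"
  shows "measure lborel {x. lam < \<bar>u x\<bar>} \<le>
     (8 / measure lborel (ball (0::'a) 1)) * (2 / measure lborel (ball (0::'a) 1)) powr (2 * s / real DIM('a))
     * gagliardo s u * lam powr (-2) * (measure lborel {x. lam / 2 < \<bar>u x\<bar>}) powr (2 * s / real DIM('a))"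
proof -
  define d where "d = real DIM('a)"
  define \<omega> where "\<omega> = measure lborel (ball (0::'a) 1)"
  define \<gamma> where "\<gamma> = 2 * s / d"
  define m where "m = (\<lambda>l. measure lborel {x. l < \<bar>u x\<bar>})"
  define A where "A = gagliardo s u"
  have d0: "d > 0" unfolding d_def by simp
  have \<omega>0: "\<omega> > 0" unfolding \<omega>_def by (rule content_ball_pos) simp
  have \<gamma>0: "\<gamma> > 0" unfolding \<gamma>_def using s d0 by simp
  have A0: "A \<ge> 0" unfolding A_def gagliardo_def by simp
  have gA: "gagliardo_nn s u = ennreal A" unfolding A_def gagliardo_def using gfin by simp
  have m0: "\<And>l. m l \<ge> 0" unfolding m_def by simp
  have em: "emeasure lborel {x. l < \<bar>u x\<bar>} = ennreal (m l)" if "l > 0" for l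
    unfolding m_def using fin[OF that] by (simp add: emeasure_eq_ennreal_measure)
  have mono_m: "m lam \<le> m (lam/2)"
  proof -
    have "emeasure lborel {x. lam < \<bar>u x\<bar>} \<le> emeasure lborel {x. lam/2 < \<bar>u x\<bar>}"
      using lam by (intro emeasure_mono) auto
    then show ?thesis using em[of lam] em[of "lam/2"] lam m0 by simp
  qed
  define c0 where "c0 = (8 / \<omega>) * (2 / \<omega>) powr \<gamma>"
  have c00: "c0 \<ge> 0" unfolding c0_def using \<omega>0 by simp
  have main: "m lam \<le> c0 * A * lam powr (-2) * m (lam/2) powr \<gamma>"
  proof (cases "m (lam/2) = 0")
    case True
    then have "m lam = 0" using mono_m m0[of lam] by simp
    then show ?thesis using c00 A0 m0 by simp
  next
    case False
    define \<mu> where "\<mu> = m (lam/2)"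
    have \<mu>0: "\<mu> > 0" using False m0[of "lam/2"] unfolding \<mu>_def by linarith
    define r where "r = (2 * \<mu> / \<omega>) powr (1 / d)"
    have r0: "r > 0" unfolding r_def using \<mu>0 \<omega>0 by simp
    have rd: "r ^ DIM('a) = 2 * \<mu> / \<omega>"
    proof -
      have "r ^ DIM('a) = r powr d" unfolding d_def using r0 by (simp add: powr_realpow)
      also have "\<dots> = 2 * \<mu> / \<omega>" unfolding r_def using \<mu>0 \<omega>0 d0 by (simp add: powr_powr)
      finally show ?thesis .
    qed
    have rpow: "r powr (d + 2 * s) = (2 * \<mu> / \<omega>) * (2 * \<mu> / \<omega>) powr \<gamma>"
    proof -
      have "r powr (d + 2 * s) = (2 * \<mu> / \<omega>) powr ((1/d) * (d + 2 * s))"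
        unfolding r_def using \<mu>0 \<omega>0 by (simp add: powr_powr)
      also have "(1/d) * (d + 2 * s) = 1 + \<gamma>" unfolding \<gamma>_def using d0 by (simp add: field_simps)
      also have "(2 * \<mu> / \<omega>) powr (1 + \<gamma>) = (2 * \<mu> / \<omega>) * (2 * \<mu> / \<omega>) powr \<gamma>"
        using \<mu>0 \<omega>0 by (simp add: powr_add)
      finally show ?thesis .
    qed
    have ballm: "measure lborel (ball x r) = 2 * \<mu>" for x :: 'a
      using content_ball_conv_unit_ball[of r x] r0 rd \<omega>0 unfolding \<omega>_def by simp
    define E where "E = {y. \<bar>u y\<bar> \<le> lam / 2}"
    define c1 where "c1 = (lam / 2)\<^sup>2 / r powr (d + 2 * s)"
    have c10: "c1 > 0" unfolding c1_def using lam r0 by simp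
    have inner: "ennreal (c1 * \<mu>) \<le> (\<integral>\<^sup>+ y. ennreal ((u x - u y)\<^sup>2 / (norm (x - y)) powr (real DIM('a) + 2 * s)) \<partial>lborel)"
      if x: "lam < \<bar>u x\<bar>" for x
    proof -
      have E_meas[measurable]: "E \<in> sets lborel" unfolding E_def by measurable
      have BE: "ball x r \<inter> E \<in> sets lborel" using E_meas by (intro sets.Int) auto
      have setle: "\<mu> \<le> measure lborel (ball x r \<inter> E)"
      proof -
        have "ball x r \<subseteq> (ball x r \<inter> E) \<union> {y. lam/2 < \<bar>u y\<bar>}" unfolding E_def by auto
        then have "measure lborel (ball x r) \<le> measure lborel ((ball x r \<inter> E) \<union> {y. lam/2 < \<bar>u y\<bar>})"
        proof (rule measure_mono_fmeasurable)
          have S1: "{y. lam/2 < \<bar>u y\<bar>} \<in> sets lborel" by measurable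
          have B1: "ball x r \<inter> E \<in> sets lborel" using E_meas by simp
          have f1: "emeasure lborel (ball x r \<inter> E) < \<infinity>"
            using emeasure_lborel_ball_finite[of x r] emeasure_mono[of "ball x r \<inter> E" "ball x r" lborel]
            by (simp add: le_less_trans)
          have "emeasure lborel ((ball x r \<inter> E) \<union> {y. lam/2 < \<bar>u y\<bar>})
              \<le> emeasure lborel (ball x r \<inter> E) + emeasure lborel {y. lam/2 < \<bar>u y\<bar>}"
            using B1 S1 by (rule emeasure_subadditive)
          also have "\<dots> < \<infinity>" using f1 fin[of "lam/2"] lam by (simp add: ennreal_add_less_top)
          finally show "(ball x r \<inter> E) \<union> {y. lam/2 < \<bar>u y\<bar>} \<in> fmeasurable lborel"
            using S1 B1 by (intro fmeasurableI) auto
        qed (use \<open>ball x r \<subseteq> _\<close> in auto)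
        also have "\<dots> \<le> measure lborel (ball x r \<inter> E) + measure lborel {y. lam/2 < \<bar>u y\<bar>}"
          apply (intro measure_subadditive)
          using fin[of "lam/2"] lam emeasure_lborel_ball_finite[of x r]
                emeasure_mono[of "ball x r \<inter> E" "ball x r" lborel] E_meas
          by (auto simp: top_unique)
        finally show ?thesis using ballm[of x] unfolding \<mu>_def m_def by simp
      qed
      have "ennreal (c1 * \<mu>) \<le> ennreal c1 * emeasure lborel (ball x r \<inter> E)"
      proof -
        have "emeasure lborel (ball x r \<inter> E) = ennreal (measure lborel (ball x r \<inter> E))"
          using emeasure_lborel_ball_finite[of x r] emeasure_mono[of "ball x r \<inter> E" "ball x r" lborel]
          by (intro emeasure_eq_ennreal_measure) (auto simp: top_unique)
        then show ?thesis using setle c10 \<mu>0 by (simp add: ennreal_mult[symmetric])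
      qed
      also have "\<dots> = (\<integral>\<^sup>+ y. ennreal c1 * indicator (ball x r \<inter> E) y \<partial>lborel)"
        by (rule nn_integral_cmult_indicator[symmetric]) (rule BE)
      also have "\<dots> \<le> (\<integral>\<^sup>+ y. ennreal ((u x - u y)\<^sup>2 / (norm (x - y)) powr (real DIM('a) + 2 * s)) \<partial>lborel)"
      proof (intro nn_integral_mono)
        fix y
        show "ennreal c1 * indicator (ball x r \<inter> E) y \<le> ennreal ((u x - u y)\<^sup>2 / (norm (x - y)) powr (real DIM('a) + 2 * s))"
        proof (cases "y \<in> ball x r \<inter> E")
          case False then show ?thesis by simp
        next
          case True
          then have yb: "norm (x - y) < r" and yE: "\<bar>u y\<bar> \<le> lam/2" by (auto simp: E_def dist_norm)
          have diff: "lam / 2 \<le> \<bar>u x - u y\<bar>" using x yE by linarith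
          have sq: "(lam/2)\<^sup>2 \<le> (u x - u y)\<^sup>2"
            using diff lam by (metis abs_le_square_iff abs_of_pos half_gt_zero_iff order.trans abs_ge_self less_le_not_le power2_abs) 
          have ny: "norm (x - y) > 0" using diff lam by auto
          have pw: "norm (x - y) powr (d + 2 * s) \<le> r powr (d + 2 * s)"
            using yb ny d0 s by (intro powr_mono2) auto
          have "c1 \<le> (u x - u y)\<^sup>2 / (norm (x - y)) powr (d + 2 * s)"
            unfolding c1_def using sq pw ny by (intro frac_le) auto
          then show ?thesis using True by (simp add: d_def)
        qed
      qed
      finally show ?thesis .
    qed
    have "ennreal (c1 * \<mu> * m lam) = ennreal (c1 * \<mu>) * emeasure lborel {x. lam < \<bar>u x\<bar>}"
      using em[OF lam] c10 \<mu>0 m0 by (simp add: ennreal_mult)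
    also have "\<dots> = (\<integral>\<^sup>+ x. ennreal (c1 * \<mu>) * indicator {x. lam < \<bar>u x\<bar>} x \<partial>lborel)"
      by (rule nn_integral_cmult_indicator[symmetric]) measurable
    also have "\<dots> \<le> gagliardo_nn s u"
      unfolding gagliardo_nn_def
    proof (intro nn_integral_mono)
      fix x
      show "ennreal (c1 * \<mu>) * indicator {x. lam < \<bar>u x\<bar>} x \<le> (\<integral>\<^sup>+ y. ennreal ((u x - u y)\<^sup>2 / (norm (x - y)) powr (real DIM('a) + 2 * s)) \<partial>lborel)"
        by (cases "lam < \<bar>u x\<bar>") (simp_all add: inner)
    qed
    finally have "c1 * \<mu> * m lam \<le> A" using gA A0 by simp
    then have "m lam \<le> A / (c1 * \<mu>)" using c10 \<mu>0 by (simp add: field_simps)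
    also have "A / (c1 * \<mu>) = c0 * A * lam powr (-2) * \<mu> powr \<gamma>"
    proof -
      have l2: "lam powr (-2) = 1 / lam\<^sup>2" using lam by (simp add: powr_minus_divide powr_numeral)
      have P: "(2 * \<mu> / \<omega>) powr \<gamma> = (2 / \<omega>) powr \<gamma> * \<mu> powr \<gamma>"
        using \<mu>0 \<omega>0 powr_mult[of "2/\<omega>" \<mu> \<gamma>] by simp
      show ?thesis unfolding c1_def c0_def rpow l2 P
        by (rule alg1) (use \<mu>0 \<omega>0 lam in auto)
    qed
    finally show ?thesis unfolding \<mu>_def .
  qed
  then show ?thesis unfolding m_def c0_def \<omega>_def \<gamma>_def d_def A_def by simp
qed



definition ee :: "real \<Rightarrow> nat \<Rightarrow> real" where
  "ee \<gamma> n = (1 - \<gamma> ^ n) / (1 - \<gamma>)"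

lemma ee_0: "ee \<gamma> 0 = 0" by (simp add: ee_def)
lemma ee_Suc: "\<gamma> < 1 \<Longrightarrow> ee \<gamma> (Suc n) = 1 + \<gamma> * ee \<gamma> n"
  by (simp add: ee_def field_simps)
lemma ee_nonneg: "0 \<le> \<gamma> \<Longrightarrow> \<gamma> < 1 \<Longrightarrow> 0 \<le> ee \<gamma> n"
  by (simp add: ee_def power_le_one)

lemma iter_bound:
  fixes a c0 \<gamma> :: real
  assumes a0: "a \<ge> 0" and c00: "c0 \<ge> 0" and g0: "0 < \<gamma>" and g1: "\<gamma> < 1"
  shows "\<exists>c\<ge>0. \<forall>(m::real\<Rightarrow>real) A. A > 0 \<and> (\<forall>l. 0 \<le> m l) \<and> (\<forall>l>0. m l \<le> a * l powr (-2))
            \<and> (\<forall>l>0. m l \<le> c0 * A * l powr (-2) * (m (l/2)) powr \<gamma>)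
          \<longrightarrow> (\<forall>l>0. m l \<le> c * A powr (ee \<gamma> n) * l powr (- (2 + 2 * \<gamma> * ee \<gamma> n)))"
proof (induction n)
  case 0
  show ?case by (rule exI[of _ a]) (auto simp: ee_0 a0)
next
  case (Suc n)
  then obtain c where c0: "c \<ge> 0" and IH: "\<And>m A. A > 0 \<Longrightarrow> (\<forall>l. 0 \<le> m l) \<Longrightarrow> (\<forall>l>0. m l \<le> a * l powr (-2))
            \<Longrightarrow> (\<forall>l>0. m l \<le> c0 * A * l powr (-2) * (m (l/2)) powr \<gamma>)
          \<Longrightarrow> (\<forall>l>0. m l \<le> c * A powr (ee \<gamma> n) * l powr (- (2 + 2 * \<gamma> * ee \<gamma> n)))" by blast
  define e where "e = ee \<gamma> n"
  define q where "q = 2 + 2 * \<gamma> * e"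
  define c' where "c' = c0 * c powr \<gamma> * 2 powr (q * \<gamma>)"
  have e0: "e \<ge> 0" unfolding e_def using g0 g1 by (simp add: ee_nonneg)
  show ?case
  proof (rule exI[of _ c'], intro conjI allI impI)
    show "0 \<le> c'" unfolding c'_def using c00 by simp
    fix m :: "real \<Rightarrow> real" and A l :: real
    assume H: "0 < A \<and> (\<forall>l. 0 \<le> m l) \<and> (\<forall>l>0. m l \<le> a * l powr - 2) \<and>
            (\<forall>l>0. m l \<le> c0 * A * l powr - 2 * m (l / 2) powr \<gamma>)"
    assume l: "0 < l"
    have A0: "A > 0" and m0: "\<And>l. 0 \<le> m l" using H by auto
    have ih: "m (l/2) \<le> c * A powr e * (l/2) powr (- q)"
      using IH[of A m] H l unfolding e_def q_def by auto
    have "m l \<le> c0 * A * l powr (-2) * (m (l/2)) powr \<gamma>" using H l by auto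
    also have "\<dots> \<le> c0 * A * l powr (-2) * (c * A powr e * (l/2) powr (- q)) powr \<gamma>"
      using ih m0[of "l/2"] g0 c00 A0 by (intro mult_left_mono powr_mono2) auto
    also have "(c * A powr e * (l/2) powr (- q)) powr \<gamma> = c powr \<gamma> * A powr (e * \<gamma>) * (l/2) powr (- q * \<gamma>)"
      using c0 A0 l by (simp add: powr_mult powr_powr)
    also have "(l/2) powr (- q * \<gamma>) = 2 powr (q * \<gamma>) * l powr (- q * \<gamma>)"
      using l by (simp add: powr_divide powr_minus_divide divide_simps)
    also have "c0 * A * l powr (-2) * (c powr \<gamma> * A powr (e * \<gamma>) * (2 powr (q * \<gamma>) * l powr (- q * \<gamma>)))
        = c' * (A powr 1 * A powr (e * \<gamma>)) * (l powr (-2) * l powr (- q * \<gamma>))"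
      unfolding c'_def using A0 by (simp add: ac_simps)
    also have "\<dots> = c' * A powr (ee \<gamma> (Suc n)) * l powr (- (2 + 2 * \<gamma> * ee \<gamma> (Suc n)))"
    proof -
      have "A powr 1 * A powr (e * \<gamma>) = A powr (ee \<gamma> (Suc n))"
        unfolding ee_Suc[OF g1] e_def[symmetric] using powr_add[of A 1 "e * \<gamma>"] by (simp add: ac_simps)
      moreover have "l powr (-2) * l powr (- q * \<gamma>) = l powr (- (2 + 2 * \<gamma> * ee \<gamma> (Suc n)))"
        unfolding ee_Suc[OF g1] e_def[symmetric] q_def by (simp add: powr_add[symmetric] algebra_simps)
      ultimately show ?thesis by simp
    qed
    finally show "m l \<le> c' * A powr ee \<gamma> (Suc n) * l powr - (2 + 2 * \<gamma> * ee \<gamma> (Suc n))" .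
  qed
qed



lemma dyadic_exists:
  fixes t :: real assumes "1 < t"
  shows "\<exists>k::nat. 2 ^ k < t \<and> t \<le> 2 ^ (k + 1)"
proof -
  obtain n :: nat where n: "t < 2 ^ n" using real_arch_pow[of 2 t] by auto
  define N where "N = (LEAST n::nat. t \<le> 2 ^ n)"
  have tN: "t \<le> 2 ^ N" unfolding N_def by (rule LeastI[of _ n]) (use n in simp)
  have N0: "N \<noteq> 0"
  proof
    assume "N = 0" then show False using tN assms by simp
  qed
  then obtain k where k: "N = Suc k" by (cases N) auto
  have "\<not> t \<le> 2 ^ k" using not_less_Least[of k "\<lambda>n. t \<le> 2 ^ n"] k unfolding N_def by auto
  then show ?thesis using tN k by (intro exI[of _ k]) auto
qed

lemma pw_dyadic:
  fixes y \<mu> p :: real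
  assumes \<mu>: "\<mu> > 0" and p: "2 \<le> p"
  shows "ennreal (\<bar>y\<bar> powr p) \<le> ennreal (\<mu> powr (p - 2) * y\<^sup>2)
     + (\<Sum>k. ennreal ((2 ^ (k + 1) * \<mu>) powr p) * indicator {z. 2 ^ k * \<mu> < \<bar>z\<bar>} y)"
proof (cases "\<bar>y\<bar> \<le> \<mu>")
  case True
  have "\<bar>y\<bar> powr p \<le> \<mu> powr (p - 2) * y\<^sup>2"
  proof (cases "y = 0")
    case False
    have "\<bar>y\<bar> powr p = \<bar>y\<bar> powr (p - 2) * \<bar>y\<bar> powr 2" using powr_add[of "\<bar>y\<bar>" "p - 2" 2] by simp
    also have "\<dots> = \<bar>y\<bar> powr (p - 2) * y\<^sup>2" using False by (simp add: powr_numeral)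
    also have "\<dots> \<le> \<mu> powr (p - 2) * y\<^sup>2" using True p by (intro mult_right_mono powr_mono2) auto
    finally show ?thesis .
  qed simp
  then have "ennreal (\<bar>y\<bar> powr p) \<le> ennreal (\<mu> powr (p - 2) * y\<^sup>2)" by simp
  also have "\<dots> \<le> ennreal (\<mu> powr (p - 2) * y\<^sup>2) + (\<Sum>k. ennreal ((2 ^ (k + 1) * \<mu>) powr p) * indicator {z. 2 ^ k * \<mu> < \<bar>z\<bar>} y)"
    by simp
  finally show ?thesis .
next
  case False
  then have "1 < \<bar>y\<bar> / \<mu>" using \<mu> by simp
  then obtain k :: nat where k1: "2 ^ k < \<bar>y\<bar> / \<mu>" and k2: "\<bar>y\<bar> / \<mu> \<le> 2 ^ (k + 1)"
    using dyadic_exists by blast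
  have ky: "2 ^ k * \<mu> < \<bar>y\<bar>" using k1 \<mu> by (simp add: field_simps)
  have ky2: "\<bar>y\<bar> \<le> 2 ^ (k + 1) * \<mu>" using k2 \<mu> by (simp add: field_simps)
  define F where "F = (\<lambda>k. ennreal ((2 ^ (k + 1) * \<mu>) powr p) * indicator {z. 2 ^ k * \<mu> < \<bar>z\<bar>} y)"
  have "ennreal (\<bar>y\<bar> powr p) \<le> ennreal ((2 ^ (k + 1) * \<mu>) powr p)"
    using ky2 p by (intro ennreal_leI powr_mono2) auto
  also have "\<dots> = F k"
    using ky by (simp add: F_def)
  also have "\<dots> \<le> suminf F"
    using sum_le_suminf[of F "{k}"] by simp
  also have "\<dots> \<le> ennreal (\<mu> powr (p - 2) * y\<^sup>2) + suminf F"
    by simp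
  finally show ?thesis unfolding F_def .
qed

lemma term_eq:
  fixes \<mu> p q K :: real and k :: nat
  assumes \<mu>: "\<mu> > 0"
  shows "(2 ^ (k + 1) * \<mu>) powr p * (K * (2 ^ k * \<mu>) powr (- q))
       = 2 powr p * K * \<mu> powr (p - q) * (2 powr (p - q)) ^ k"
proof -
  have a: "(2 ^ (k + 1) * \<mu>) powr p = 2 powr p * (2 powr p) ^ k * \<mu> powr p"
    using \<mu> by (simp add: powr_mult powr_realpow[symmetric] powr_powr powr_add[symmetric] powr_power
        algebra_simps)
  have b: "(2 ^ k * \<mu>) powr (- q) = (2 powr (- q)) ^ k * \<mu> powr (- q)"
    using \<mu> by (simp add: powr_mult powr_realpow[symmetric] powr_powr powr_power algebra_simps)
  have c: "(2 powr (p - q)) ^ k = (2 powr p) ^ k * (2 powr (- q)) ^ k"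
    by (simp add: powr_add[symmetric] power_mult_distrib[symmetric])
  have d: "\<mu> powr (p - q) = \<mu> powr p * \<mu> powr (- q)"
    by (simp add: powr_add[symmetric])
  show ?thesis unfolding a b c d by (simp add: ac_simps)
qed

lemma strong_bound:
  fixes u :: "'a::euclidean_space \<Rightarrow> real"
  assumes u[measurable]: "u \<in> borel_measurable lborel"
    and L2: "(\<integral>\<^sup>+x. ennreal ((u x)\<^sup>2) \<partial>lborel) \<le> ennreal a"
    and weak: "\<And>l. l > 0 \<Longrightarrow> emeasure lborel {x. l < \<bar>u x\<bar>} \<le> ennreal (K * l powr (- q))"
    and K0: "K \<ge> 0" and a0: "a \<ge> 0" and p: "2 \<le> p" and pq: "p < q" and \<mu>: "\<mu> > 0"
  shows "(\<integral>\<^sup>+x. ennreal (\<bar>u x\<bar> powr p) \<partial>lborel)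
     \<le> ennreal (\<mu> powr (p - 2) * a + 2 powr p * K * \<mu> powr (p - q) / (1 - 2 powr (p - q)))"
proof -
  define r where "r = 2 powr (p - q)"
  have r0: "0 < r" and r1: "r < 1" unfolding r_def using pq powr_less_mono[of "p - q" 0 2] by auto
  have "(\<integral>\<^sup>+x. ennreal (\<bar>u x\<bar> powr p) \<partial>lborel)
     \<le> (\<integral>\<^sup>+x. ennreal (\<mu> powr (p - 2) * (u x)\<^sup>2)
     + (\<Sum>k. ennreal ((2 ^ (k + 1) * \<mu>) powr p) * indicator {z. 2 ^ k * \<mu> < \<bar>u z\<bar>} x) \<partial>lborel)"
  proof (intro nn_integral_mono)
    fix x
    have ii: "\<And>k. indicator {z. 2^k*\<mu> < \<bar>u z\<bar>} x = (indicator {z. 2^k*\<mu> < \<bar>z\<bar>} (u x) :: ennreal)"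
      by (simp add: indicator_def)
    show "ennreal (\<bar>u x\<bar> powr p) \<le> ennreal (\<mu> powr (p - 2) * (u x)\<^sup>2)
     + (\<Sum>k. ennreal ((2 ^ (k + 1) * \<mu>) powr p) * indicator {z. 2 ^ k * \<mu> < \<bar>u z\<bar>} x)"
      unfolding ii by (rule pw_dyadic[OF \<mu> p])
  qed
  also have "\<dots> = (\<integral>\<^sup>+x. ennreal (\<mu> powr (p - 2)) * ennreal ((u x)\<^sup>2) \<partial>lborel)
     + (\<Sum>k. \<integral>\<^sup>+x. ennreal ((2 ^ (k + 1) * \<mu>) powr p) * indicator {z. 2 ^ k * \<mu> < \<bar>u z\<bar>} x \<partial>lborel)"
    by (subst nn_integral_add) (auto simp: nn_integral_suminf ennreal_mult)
  also have "\<dots> = ennreal (\<mu> powr (p - 2)) * (\<integral>\<^sup>+x. ennreal ((u x)\<^sup>2) \<partial>lborel)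
     + (\<Sum>k. ennreal ((2 ^ (k + 1) * \<mu>) powr p) * emeasure lborel {z. 2 ^ k * \<mu> < \<bar>u z\<bar>})"
    by (subst nn_integral_cmult) (auto simp: nn_integral_cmult_indicator)
  also have "\<dots> \<le> ennreal (\<mu> powr (p - 2)) * ennreal a
     + (\<Sum>k. ennreal (2 powr p * K * \<mu> powr (p - q) * r ^ k))"
  proof (intro add_mono mult_left_mono suminf_le)
    fix k :: nat
    have "ennreal ((2 ^ (k + 1) * \<mu>) powr p) * emeasure lborel {z. 2 ^ k * \<mu> < \<bar>u z\<bar>}
        \<le> ennreal ((2 ^ (k + 1) * \<mu>) powr p) * ennreal (K * (2 ^ k * \<mu>) powr (- q))"
      using \<mu> by (intro mult_left_mono weak) auto
    also have "\<dots> = ennreal (2 powr p * K * \<mu> powr (p - q) * r ^ k)"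
      unfolding r_def using term_eq[OF \<mu>, of k p K q] K0 by (simp add: ennreal_mult[symmetric])
    finally show "ennreal ((2 ^ (k + 1) * \<mu>) powr p) * emeasure lborel {z. 2 ^ k * \<mu> < \<bar>u z\<bar>}
        \<le> ennreal (2 powr p * K * \<mu> powr (p - q) * r ^ k)" .
  qed (use L2 in auto)
  also have "(\<Sum>k. ennreal (2 powr p * K * \<mu> powr (p - q) * r ^ k)) = ennreal (2 powr p * K * \<mu> powr (p - q) / (1 - r))"
  proof -
    have "(\<Sum>k. ennreal (2 powr p * K * \<mu> powr (p - q) * r ^ k)) = ennreal (\<Sum>k. 2 powr p * K * \<mu> powr (p - q) * r ^ k)"
      using r0 r1 K0 by (intro suminf_ennreal2) (auto intro!: summable_mult summable_geometric)
    also have "(\<Sum>k. 2 powr p * K * \<mu> powr (p - q) * r ^ k) = 2 powr p * K * \<mu> powr (p - q) * (1 / (1 - r))"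
      using r0 r1 by (subst suminf_mult) (auto simp: suminf_geometric)
    finally show ?thesis by simp
  qed
  also have "ennreal (\<mu> powr (p - 2)) * ennreal a + ennreal (2 powr p * K * \<mu> powr (p - q) / (1 - r))
      = ennreal (\<mu> powr (p - 2) * a + 2 powr p * K * \<mu> powr (p - q) / (1 - r))"
    using a0 K0 r1 by (simp add: ennreal_mult ennreal_plus)
  finally show ?thesis unfolding r_def .
qed



lemma cheb:
  fixes u :: "'a::euclidean_space \<Rightarrow> real"
  assumes u[measurable]: "u \<in> borel_measurable lborel"
    and L2: "(\<integral>\<^sup>+x. ennreal ((u x)\<^sup>2) \<partial>lborel) \<le> ennreal a"
    and l: "l > 0"
  shows "emeasure lborel {x. l < \<bar>u x\<bar>} \<le> ennreal (a * l powr (-2))"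
proof -
  define S where "S = {x. l < \<bar>u x\<bar>}"
  have S[measurable]: "S \<in> sets lborel" unfolding S_def by measurable
  have "ennreal (l\<^sup>2) * emeasure lborel S = (\<integral>\<^sup>+x. ennreal (l\<^sup>2) * indicator S x \<partial>lborel)"
    by (rule nn_integral_cmult_indicator[symmetric]) (rule S)
  also have "\<dots> \<le> (\<integral>\<^sup>+x. ennreal ((u x)\<^sup>2) \<partial>lborel)"
  proof (intro nn_integral_mono)
    fix x
    show "ennreal (l\<^sup>2) * indicator S x \<le> ennreal ((u x)\<^sup>2)"
    proof (cases "x \<in> S")
      case True
      then have "l \<le> \<bar>u x\<bar>" unfolding S_def by simp
      then have "l\<^sup>2 \<le> \<bar>u x\<bar>\<^sup>2" using l by (intro power_mono) auto
      then have "l\<^sup>2 \<le> (u x)\<^sup>2" by simp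
      then show ?thesis using True by simp
    qed simp
  qed
  also have "\<dots> \<le> ennreal a" by (rule L2)
  finally have *: "ennreal (l\<^sup>2) * emeasure lborel S \<le> ennreal a" .
  have one: "ennreal (1 / l\<^sup>2) * ennreal (l\<^sup>2) = 1"
    by (subst ennreal_mult[symmetric]) (use l in auto)
  have "emeasure lborel S = ennreal (1 / l\<^sup>2) * (ennreal (l\<^sup>2) * emeasure lborel S)"
    by (simp only: mult.assoc[symmetric] one mult_1)
  also have "\<dots> \<le> ennreal (1 / l\<^sup>2) * ennreal a" by (intro mult_left_mono *) simp
  also have "\<dots> \<le> ennreal (a * l powr (-2))"
  proof (cases "a \<ge> 0")
    case True
    have "a * l powr (-2) = 1 / l\<^sup>2 * a" using l by (simp add: powr_minus_divide powr_numeral)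
    moreover have "ennreal (1 / l\<^sup>2) * ennreal a = ennreal (1 / l\<^sup>2 * a)"
      by (subst ennreal_mult[symmetric]) (use l True in auto)
    ultimately show ?thesis by simp
  next
    case False
    then show ?thesis by (simp add: ennreal_neg)
  qed
  finally show ?thesis unfolding S_def .
qed

lemma exists_n:
  fixes \<gamma> p :: real
  assumes g0: "0 < \<gamma>" and g1: "\<gamma> < 1" and p: "p < 2 / (1 - \<gamma>)"
  shows "\<exists>n. 0 < ee \<gamma> n \<and> p < 2 + 2 * \<gamma> * ee \<gamma> n"
proof -
  have pos: "(2 / (1 - \<gamma>) - p) * (1 - \<gamma>) / 2 > 0" using p g1 by simp
  obtain n where n: "\<gamma> ^ n < (2 / (1 - \<gamma>) - p) * (1 - \<gamma>) / 2"
    using real_arch_pow_inv[OF pos g1] by blast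
  have "\<gamma> ^ Suc n \<le> \<gamma> ^ n" using g0 g1 by (simp add: power_decreasing_iff order_less_imp_le mult_left_le_one_le)
  then have n': "\<gamma> ^ Suc n < (2 / (1 - \<gamma>) - p) * (1 - \<gamma>) / 2" using n by linarith
  have "\<gamma> ^ Suc n < 1" using power_strict_decreasing_iff[OF g0 g1, of "Suc n" 0] by simp
  then have e0: "0 < ee \<gamma> (Suc n)" unfolding ee_def using g1 by simp
  have eq: "2 + 2 * \<gamma> * ee \<gamma> (Suc n) = 2 / (1 - \<gamma>) - 2 * \<gamma> ^ Suc (Suc n) / (1 - \<gamma>)"
  proof -
    have gen: "2 + 2 * \<gamma> * ((1 - g) / (1 - \<gamma>)) = 2 / (1 - \<gamma>) - 2 * (\<gamma> * g) / (1 - \<gamma>)" for g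
    proof -
      have ne: "1 - \<gamma> \<noteq> 0" using g1 by simp
      show ?thesis using ne by (simp add: divide_simps) (simp add: algebra_simps)
    qed
    show ?thesis unfolding ee_def using gen[of "\<gamma> ^ Suc n"] by simp
  qed
  have lt1: "2 * \<gamma> ^ Suc (Suc n) / (1 - \<gamma>) < 2 * \<gamma> ^ Suc n / (1 - \<gamma>)"
    using g0 g1 by (simp add: divide_strict_right_mono power_strict_decreasing)
  have lt2: "2 * \<gamma> ^ Suc n / (1 - \<gamma>) < 2 / (1 - \<gamma>) - p" using n' g1 by (simp add: field_simps)
  have "p < 2 + 2 * \<gamma> * ee \<gamma> (Suc n)" using eq lt1 lt2 by linarith
  then show ?thesis using e0 by blast
qed



lemma AE_zero_levels:
  fixes u :: "'a::euclidean_space \<Rightarrow> real"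
  assumes u[measurable]: "u \<in> borel_measurable lborel"
    and z: "\<And>l. l > 0 \<Longrightarrow> emeasure lborel {x. l < \<bar>u x\<bar>} = 0"
  shows "AE x in lborel. u x = 0"
proof (rule AE_I')
  let ?N = "\<Union>i::nat. {x. 1 / (real i + 1) < \<bar>u x\<bar>}"
  have "emeasure lborel ?N = 0"
    by (rule emeasure_UN_eq_0) (auto intro!: z)
  moreover have "?N \<in> sets lborel" by measurable
  ultimately show "?N \<in> null_sets lborel" by (simp add: null_sets_def)
  show "{x \<in> space lborel. \<not> u x = 0} \<subseteq> ?N"
  proof
    fix x assume "x \<in> {x \<in> space lborel. \<not> u x = 0}"
    then have ux: "\<bar>u x\<bar> > 0" by simp
    obtain i :: nat where "1 / (real i + 1) < \<bar>u x\<bar>"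
      using ux by (metis add.commute nat_approx_posE of_nat_Suc)
    then show "x \<in> ?N" by auto
  qed
qed

lemma GN:
  fixes s p a :: real
  assumes s: "0 < s" "2 * s < real DIM('a::euclidean_space)" and p2: "2 < p"
    and pQ: "p < 2 * real DIM('a) / (real DIM('a) - 2 * s)" and a0: "a \<ge> 0"
  shows "\<exists>C\<ge>0. \<forall>u::'a \<Rightarrow> real. u \<in> borel_measurable lborel \<and> (\<integral>\<^sup>+x. ennreal ((u x)\<^sup>2) \<partial>lborel) \<le> ennreal a
     \<and> gagliardo_nn s u < \<infinity>
     \<longrightarrow> (\<integral>\<^sup>+x. ennreal (\<bar>u x\<bar> powr p) \<partial>lborel) \<le> ennreal (C * gagliardo s u powr (real DIM('a) * (p - 2) / (4 * s)))"
proof -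
  define d where "d = real DIM('a)"
  define \<gamma> where "\<gamma> = 2 * s / d"
  have d0: "d > 0" unfolding d_def by simp
  have g0: "0 < \<gamma>" unfolding \<gamma>_def using s d0 by simp
  have g1: "\<gamma> < 1" unfolding \<gamma>_def using s d0 unfolding d_def by simp
  have Qeq: "2 * d / (d - 2 * s) = 2 / (1 - \<gamma>)"
    unfolding \<gamma>_def using d0 s(2) unfolding d_def[symmetric] by (simp add: field_simps)
  have pQ': "p < 2 / (1 - \<gamma>)" using pQ Qeq unfolding d_def by simp
  obtain n where e0: "0 < ee \<gamma> n" and pq: "p < 2 + 2 * \<gamma> * ee \<gamma> n"
    using exists_n[OF g0 g1 pQ'] by blast
  define e where "e = ee \<gamma> n"
  define q where "q = 2 + 2 * \<gamma> * e"
  define \<omega> where "\<omega> = measure lborel (ball (0::'a) 1)"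
  have \<omega>0: "\<omega> > 0" unfolding \<omega>_def by (rule content_ball_pos) simp
  define c0 where "c0 = (8 / \<omega>) * (2 / \<omega>) powr \<gamma>"
  have c00: "c0 \<ge> 0" unfolding c0_def using \<omega>0 by simp
  obtain c where c0': "c \<ge> 0" and cb: "\<And>m A. A > 0 \<Longrightarrow> (\<forall>l. 0 \<le> m l) \<Longrightarrow> (\<forall>l>0. m l \<le> a * l powr (-2))
            \<Longrightarrow> (\<forall>l>0. m l \<le> c0 * A * l powr (-2) * (m (l/2)) powr \<gamma>)
          \<Longrightarrow> (\<forall>l>0. m l \<le> c * A powr e * l powr (- q))"
    using iter_bound[OF a0 c00 g0 g1, of n] unfolding e_def q_def by blast
  define r where "r = 2 powr (p - q)"
  have r1: "r < 1" unfolding r_def using pq powr_less_mono[of "p - q" 0 2] unfolding q_def e_def by auto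
  define C where "C = a + 2 powr p * c / (1 - r)"
  have C0: "C \<ge> 0" unfolding C_def using a0 c0' r1 by simp
  define \<theta> where "\<theta> = (p - 2) / (2 * \<gamma>)"
  have \<theta>eq: "real DIM('a) * (p - 2) / (4 * s) = \<theta>" unfolding \<theta>_def \<gamma>_def d_def using s d0
    by (simp add: field_simps)
  show ?thesis
  proof (rule exI[of _ C], intro conjI allI impI C0)
    fix u :: "'a \<Rightarrow> real"
    assume H: "u \<in> borel_measurable lborel \<and> (\<integral>\<^sup>+x. ennreal ((u x)\<^sup>2) \<partial>lborel) \<le> ennreal a \<and> gagliardo_nn s u < \<infinity>"
    have u[measurable]: "u \<in> borel_measurable lborel" using H by simp
    have L2: "(\<integral>\<^sup>+x. ennreal ((u x)\<^sup>2) \<partial>lborel) \<le> ennreal a" using H by simp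
    have gfin: "gagliardo_nn s u < \<infinity>" using H by simp
    define A where "A = gagliardo s u"
    have A0: "A \<ge> 0" unfolding A_def gagliardo_def by simp
    define m where "m = (\<lambda>l. measure lborel {x. l < \<bar>u x\<bar>})"
    have m0: "\<forall>l. 0 \<le> m l" unfolding m_def by simp
    have fin: "\<And>l. l > 0 \<Longrightarrow> emeasure lborel {x. l < \<bar>u x\<bar>} < \<infinity>"
    proof -
      fix l :: real assume l: "l > 0"
      show "emeasure lborel {x. l < \<bar>u x\<bar>} < \<infinity>"
        using cheb[OF u L2 l] by (simp add: le_less_trans)
    qed
    have em: "\<And>l. l > 0 \<Longrightarrow> emeasure lborel {x. l < \<bar>u x\<bar>} = ennreal (m l)"
    proof -
      fix l :: real assume l: "l > 0"
      show "emeasure lborel {x. l < \<bar>u x\<bar>} = ennreal (m l)"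
        unfolding m_def using fin[OF l] by (intro emeasure_eq_ennreal_measure) simp
    qed
    have F1: "\<forall>l>0. m l \<le> a * l powr (-2)"
    proof (intro allI impI)
      fix l :: real assume l: "l > 0"
      have "ennreal (m l) \<le> ennreal (a * l powr (-2))" using cheb[OF u L2 l] em[OF l] by simp
      moreover have nn: "0 \<le> a * l powr (-2)" using a0 by simp
      ultimately show "m l \<le> a * l powr (-2)" by (simp add: ennreal_le_iff)
    qed
    have F2: "\<forall>l>0. m l \<le> c0 * A * l powr (-2) * (m (l/2)) powr \<gamma>"
      using dist_ineq[OF u s(1) fin gfin] unfolding m_def c0_def \<omega>_def \<gamma>_def d_def A_def by auto
    show "(\<integral>\<^sup>+x. ennreal (\<bar>u x\<bar> powr p) \<partial>lborel) \<le> ennreal (C * gagliardo s u powr (real DIM('a) * (p - 2) / (4 * s)))"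
    proof (cases "A = 0")
      case True
      have "\<And>l. l > 0 \<Longrightarrow> m l \<le> 0" using F2 True by simp
      then have "\<And>l. l > 0 \<Longrightarrow> emeasure lborel {x. l < \<bar>u x\<bar>} = 0"
        using em m0 by (metis antisym ennreal_0)
      then have "AE x in lborel. u x = 0" by (rule AE_zero_levels[OF u])
      then have "AE x in lborel. ennreal (\<bar>u x\<bar> powr p) = 0" by eventually_elim simp
      then have "(\<integral>\<^sup>+x. ennreal (\<bar>u x\<bar> powr p) \<partial>lborel) = (\<integral>\<^sup>+x. 0 \<partial>(lborel :: 'a measure))"
        by (rule nn_integral_cong_AE)
      then show ?thesis by simp
    next
      case False
      then have Ap: "A > 0" using A0 by simp
      have wk: "\<forall>l>0. m l \<le> c * A powr e * l powr (- q)" by (rule cb[OF Ap m0 F1 F2])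
      define \<mu> where "\<mu> = A powr (1 / (2 * \<gamma>))"
      have \<mu>0: "\<mu> > 0" unfolding \<mu>_def using Ap by simp
      have weak: "\<And>l. l > 0 \<Longrightarrow> emeasure lborel {x. l < \<bar>u x\<bar>} \<le> ennreal (c * A powr e * l powr (- q))"
        using em wk by (simp add: ennreal_leI)
      have "(\<integral>\<^sup>+x. ennreal (\<bar>u x\<bar> powr p) \<partial>lborel)
          \<le> ennreal (\<mu> powr (p - 2) * a + 2 powr p * (c * A powr e) * \<mu> powr (p - q) / (1 - 2 powr (p - q)))"
        by (rule strong_bound[OF u L2 weak]) (use c0' a0 p2 pq \<mu>0 in \<open>auto simp: q_def e_def\<close>)
      also have "\<mu> powr (p - 2) * a + 2 powr p * (c * A powr e) * \<mu> powr (p - q) / (1 - 2 powr (p - q))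
          = C * A powr \<theta>"
      proof -
        have m1: "\<mu> powr (p - 2) = A powr \<theta>" unfolding \<mu>_def \<theta>_def using Ap by (simp add: powr_powr)
        have "A powr e * \<mu> powr (p - q) = A powr (e + (p - q) / (2 * \<gamma>))"
          unfolding \<mu>_def using Ap by (simp add: powr_powr powr_add)
        also have "e + (p - q) / (2 * \<gamma>) = \<theta>" unfolding \<theta>_def q_def using g0 by (simp add: field_simps)
        finally have m2: "A powr e * \<mu> powr (p - q) = A powr \<theta>" .
        have "2 powr p * (c * A powr e) * \<mu> powr (p - q) / (1 - 2 powr (p - q)) = 2 powr p * c * (A powr e * \<mu> powr (p - q)) / (1 - r)"
          unfolding r_def by (simp add: ac_simps)
        then show ?thesis unfolding C_def m1 m2 by (simp add: algebra_simps)
      qed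
      finally show ?thesis unfolding \<theta>eq A_def .
    qed
  qed
qed



lemma nn_integral_scale:
  fixes f :: "'a::euclidean_space \<Rightarrow> ennreal" and c :: real
  assumes f[measurable]: "f \<in> borel_measurable borel" and c: "c > 0"
  shows "(\<integral>\<^sup>+x. f (c *\<^sub>R x) \<partial>lborel) = ennreal (1 / c ^ DIM('a)) * integral\<^sup>N lborel f"
proof -
  have eq: "lborel = density (distr lborel borel (\<lambda>x::'a. 0 + c *\<^sub>R x)) (\<lambda>_. \<bar>c\<bar>^DIM('a))"
    using lborel_affine[of c "0::'a"] c by simp
  have "integral\<^sup>N lborel f = integral\<^sup>N (density (distr lborel borel (\<lambda>x::'a. 0 + c *\<^sub>R x)) (\<lambda>_. \<bar>c\<bar>^DIM('a))) f"
    by (subst eq[symmetric]) (rule refl)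
  also have "\<dots> = (\<integral>\<^sup>+x. ennreal (\<bar>c\<bar>^DIM('a)) * f x \<partial>(distr lborel borel (\<lambda>x::'a. 0 + c *\<^sub>R x)))"
    by (subst nn_integral_density) auto
  also have "\<dots> = (\<integral>\<^sup>+x. ennreal (\<bar>c\<bar>^DIM('a)) * f (0 + c *\<^sub>R x) \<partial>lborel)"
    by (subst nn_integral_distr) auto
  also have "\<dots> = ennreal (c^DIM('a)) * (\<integral>\<^sup>+x. f (c *\<^sub>R x) \<partial>lborel)"
    using c by (subst nn_integral_cmult) auto
  finally have *: "integral\<^sup>N lborel f = ennreal (c^DIM('a)) * (\<integral>\<^sup>+x. f (c *\<^sub>R x) \<partial>lborel)" .
  have one: "ennreal (1 / c ^ DIM('a)) * ennreal (c^DIM('a)) = 1"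
    by (subst ennreal_mult[symmetric]) (use c in auto)
  show ?thesis unfolding * by (simp only: mult.assoc[symmetric] one mult_1)
qed

lemma gag_meas:
  fixes u :: "'a::euclidean_space \<Rightarrow> real"
  assumes u[measurable]: "u \<in> borel_measurable lborel"
  shows "(\<lambda>w. \<integral>\<^sup>+ z. ennreal ((u w - u z)\<^sup>2 / (norm (w - z)) powr (real DIM('a) + 2 * s)) \<partial>lborel) \<in> borel_measurable borel"
proof -
  have "(\<lambda>w. \<integral>\<^sup>+ z. ennreal ((u w - u z)\<^sup>2 / (norm (w - z)) powr (real DIM('a) + 2 * s)) \<partial>lborel) \<in> borel_measurable lborel"
    by measurable
  then show ?thesis by simp
qed



lemma scale_alg:
  fixes t a b N d k :: real
  assumes t: "t > 0" and N: "N \<ge> 0"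
  shows "(t powr (d/2) * a - t powr (d/2) * b)\<^sup>2 / ((1/t) * N) powr k
       = t powr (d + k) * ((a - b)\<^sup>2 / N powr k)"
proof -
  have sq: "(t powr (d/2) * a - t powr (d/2) * b)\<^sup>2 = t powr d * (a - b)\<^sup>2"
  proof -
    have "(t powr (d/2))\<^sup>2 = t powr d"
      using t by (simp add: power2_eq_square powr_add[symmetric])
    then show ?thesis by (simp add: power2_eq_square algebra_simps)
  qed
  have den: "((1/t) * N) powr k = N powr k / t powr k"
    using t N by (simp add: powr_mult powr_divide)
  show ?thesis
  proof (cases "N = 0")
    case True then show ?thesis by simp
  next
    case False
    then have "N powr k > 0" using N by simp
    then show ?thesis unfolding sq den using t by (simp add: powr_add field_simps)
  qed
qed

lemma gag_scale:
  fixes u :: "'a::euclidean_space \<Rightarrow> real" and t s :: real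
  assumes u[measurable]: "u \<in> borel_measurable lborel" and t: "t > 0"
  shows "gagliardo_nn s (dil t u) = ennreal (t powr (2 * s)) * gagliardo_nn s u"
proof -
  define d where "d = real DIM('a)"
  define k where "k = d + 2 * s"
  define I where "I = (\<lambda>w. \<integral>\<^sup>+ z. ennreal ((u w - u z)\<^sup>2 / (norm (w - z)) powr (real DIM('a) + 2 * s)) \<partial>lborel)"
  have Im: "I \<in> borel_measurable borel" unfolding I_def by (rule gag_meas[OF u])
  have tD: "t ^ DIM('a) = t powr d" unfolding d_def using t by (simp add: powr_realpow)
  have inner: "(\<integral>\<^sup>+ y. ennreal ((dil t u x - dil t u y)\<^sup>2 / (norm (x - y)) powr (real DIM('a) + 2 * s)) \<partial>lborel)
     = ennreal (t powr k) * I (t *\<^sub>R x)" for x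
  proof -
    define F where "F = (\<lambda>z. ennreal ((t powr (d/2) * u (t *\<^sub>R x) - t powr (d/2) * u z)\<^sup>2 / (norm ((1/t) *\<^sub>R (t *\<^sub>R x - z))) powr k))"
    have Fm: "F \<in> borel_measurable borel" unfolding F_def by measurable
    have "(\<integral>\<^sup>+ y. ennreal ((dil t u x - dil t u y)\<^sup>2 / (norm (x - y)) powr (real DIM('a) + 2 * s)) \<partial>lborel)
        = (\<integral>\<^sup>+ y. F (t *\<^sub>R y) \<partial>lborel)"
    proof (intro nn_integral_cong)
      fix y :: 'a
      have "(1/t) *\<^sub>R (t *\<^sub>R x - t *\<^sub>R y) = x - y" using t by (simp add: scaleR_diff_right)
      then show "ennreal ((dil t u x - dil t u y)\<^sup>2 / (norm (x - y)) powr (real DIM('a) + 2 * s)) = F (t *\<^sub>R y)"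
        unfolding F_def dil_def d_def k_def by simp
    qed
    also have "\<dots> = ennreal (1 / t ^ DIM('a)) * integral\<^sup>N lborel F"
      by (rule nn_integral_scale[OF Fm t])
    also have "integral\<^sup>N lborel F = (\<integral>\<^sup>+ z. ennreal (t powr (d + k)) * ennreal ((u (t *\<^sub>R x) - u z)\<^sup>2 / (norm (t *\<^sub>R x - z)) powr k) \<partial>lborel)"
    proof (intro nn_integral_cong)
      fix z :: 'a
      have "norm ((1/t) *\<^sub>R (t *\<^sub>R x - z)) = (1/t) * norm (t *\<^sub>R x - z)" using t by simp
      then show "F z = ennreal (t powr (d + k)) * ennreal ((u (t *\<^sub>R x) - u z)\<^sup>2 / (norm (t *\<^sub>R x - z)) powr k)"
        unfolding F_def using scale_alg[OF t norm_ge_zero, of d "u (t *\<^sub>R x)" "u z" "t *\<^sub>R x - z" k] t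
        by (simp add: ennreal_mult[symmetric])
    qed
    also have "\<dots> = ennreal (t powr (d + k)) * I (t *\<^sub>R x)"
      unfolding I_def k_def d_def by (subst nn_integral_cmult) auto
    also have "ennreal (1 / t ^ DIM('a)) * (ennreal (t powr (d + k)) * I (t *\<^sub>R x)) = ennreal (t powr k) * I (t *\<^sub>R x)"
    proof -
      have "ennreal (1 / t ^ DIM('a)) * ennreal (t powr (d + k)) = ennreal (1 / t ^ DIM('a) * t powr (d + k))"
        by (subst ennreal_mult[symmetric]) (use t in auto)
      also have "1 / t ^ DIM('a) * t powr (d + k) = t powr k" unfolding tD using t by (simp add: powr_add)
      finally show ?thesis by (simp add: mult.assoc[symmetric])
    qed
    finally show ?thesis .
  qed
  have "gagliardo_nn s (dil t u) = (\<integral>\<^sup>+ x. ennreal (t powr k) * I (t *\<^sub>R x) \<partial>lborel)"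
    unfolding gagliardo_nn_def inner by simp
  also have "\<dots> = ennreal (t powr k) * (\<integral>\<^sup>+ x. I (t *\<^sub>R x) \<partial>lborel)"
    using Im by (subst nn_integral_cmult) auto
  also have "(\<integral>\<^sup>+ x. I (t *\<^sub>R x) \<partial>lborel) = ennreal (1 / t ^ DIM('a)) * gagliardo_nn s u"
    unfolding gagliardo_nn_def I_def[symmetric] by (rule nn_integral_scale[OF Im t])
  also have "ennreal (t powr k) * (ennreal (1 / t ^ DIM('a)) * gagliardo_nn s u) = ennreal (t powr (2 * s)) * gagliardo_nn s u"
  proof -
    have "ennreal (t powr k) * ennreal (1 / t ^ DIM('a)) = ennreal (t powr k * (1 / t ^ DIM('a)))"
      by (subst ennreal_mult[symmetric]) (use t in auto)
    also have "t powr k * (1 / t ^ DIM('a)) = t powr (2 * s)" unfolding tD k_def using t by (simp add: powr_add)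
    finally show ?thesis by (simp add: mult.assoc[symmetric])
  qed
  finally show ?thesis .
qed



lemma Lp_real_bound:
  fixes u :: "'a::euclidean_space \<Rightarrow> real"
  assumes u[measurable]: "u \<in> borel_measurable lborel"
    and b: "(\<integral>\<^sup>+x. ennreal (\<bar>u x\<bar> powr p) \<partial>lborel) \<le> ennreal X" and X: "X \<ge> 0"
  shows "integrable lborel (\<lambda>x. \<bar>u x\<bar> powr p)" and "(\<integral>x. \<bar>u x\<bar> powr p \<partial>lborel) \<le> X"
proof -
  show int: "integrable lborel (\<lambda>x. \<bar>u x\<bar> powr p)"
    by (rule integrableI_bounded) (use b in \<open>auto simp: le_less_trans\<close>)
  have "(\<integral>x. \<bar>u x\<bar> powr p \<partial>lborel) = enn2real (\<integral>\<^sup>+x. ennreal (\<bar>u x\<bar> powr p) \<partial>lborel)"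
    by (rule integral_eq_nn_integral) auto
  also have "\<dots> \<le> enn2real (ennreal X)"
    using b by (intro enn2real_mono) auto
  finally show "(\<integral>x. \<bar>u x\<bar> powr p \<partial>lborel) \<le> X" using X by simp
qed

theorem lemma4p2:
  fixes s1 s2 \<alpha> \<beta> \<sigma>1 :: real
    and g :: "real \<Rightarrow> real"
    and V :: "'a::euclidean_space \<Rightarrow> real"
    and gradV :: "'a \<Rightarrow> 'a"
  defines "d \<equiv> real DIM('a)"
  assumes s_range: "0 < s1" "s1 < s2" "s2 < 1"
    and d_range: "2 * s1 < d" "d < 2 * s1 * s2 / (s2 - s1)"
    and G1: "continuous_on UNIV g" "\<And>s. g (- s) = - g s"
    and G2: "2 + 4 * s2 / d < \<alpha>" "\<alpha> < \<beta>" "\<beta> < 2 * d / (d - 2 * s1)"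
            "\<And>s. \<alpha> * Gprim g s \<le> g s * s \<and> g s * s \<le> \<beta> * Gprim g s"
    and sigma1: "0 \<le> \<sigma>1" "\<sigma>1 \<le> (d * (\<alpha> - 2) - 4) / (d * (\<alpha> - 2))"
    and V2_grad: "AE x in lborel. (V has_derivative (\<lambda>h. gradV x \<bullet> h)) (at x)"
    and V2_lim: "((\<lambda>x. 1/2 * (gradV x \<bullet> x)) \<longlongrightarrow> 0) at_infinity"
    and V2_bound: "\<exists>\<sigma>2. 0 < \<sigma>2 \<and> \<sigma>2 < min (s1 - (\<beta> - 2) * d / (2 * \<beta>))
                                        (d * (\<alpha> - 2) * (1 - \<sigma>1) / 4 - s2)
              \<and> (\<forall>u. in_H s1 s2 u \<longrightarrow>
                    \<bar>\<integral> x. 1/2 * (gradV x \<bullet> x) * (u x)\<^sup>2 \<partial>lborel\<bar>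
                      \<le> \<sigma>2 * (gagliardo s1 u + gagliardo s2 u))"
    and a_pos: "0 < a"
  shows "\<exists>\<delta>>0.
           (\<forall>t u. 0 < t \<and> u \<in> S_set s1 s2 a \<and> gagliardo s1 u + gagliardo s2 u = 1
                   \<and> dil t u \<in> P_set s1 s2 gradV g a \<longrightarrow> \<delta> \<le> t)
         \<and> (\<forall>u \<in> P_set s1 s2 gradV g a. \<delta>\<^sup>2 \<le> gagliardo s1 u + gagliardo s2 u)"
proof -
  have d0: "d > 0" unfolding d_def by simp
  obtain \<sigma>2 where \<sigma>2: "0 < \<sigma>2" "\<sigma>2 < s1 - (\<beta> - 2) * d / (2 * \<beta>)"
    and Vb: "\<And>u. in_H s1 s2 u \<Longrightarrow> \<bar>\<integral> x. 1/2 * (gradV x \<bullet> x) * (u x)\<^sup>2 \<partial>lborel\<bar>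
                      \<le> \<sigma>2 * (gagliardo s1 u + gagliardo s2 u)"
    using V2_bound by auto
  have a2: "2 + 4 * s1 / d < \<alpha>"
  proof -
    have "4 * s1 / d < 4 * s2 / d" using s_range d0 by (simp add: divide_strict_right_mono)
    then show ?thesis using G2(1) by linarith
  qed
  have al2: "\<alpha> > 2" using a2 s_range d0 by (smt (verit) divide_pos_pos)
  have be2: "\<beta> > 2" using al2 G2(2) by simp
  have s1\<sigma>: "\<sigma>2 < s1"
  proof -
    have "(\<beta> - 2) * d / (2 * \<beta>) > 0" using be2 d0 by simp
    then show ?thesis using \<sigma>2 by linarith
  qed
  have aQ: "\<alpha> < 2 * real DIM('a) / (real DIM('a) - 2 * s1)" using G2 unfolding d_def by simp
  have bQ: "\<beta> < 2 * real DIM('a) / (real DIM('a) - 2 * s1)" using G2 unfolding d_def by simp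
  have sD: "2 * s1 < real DIM('a)" using d_range unfolding d_def by simp
  obtain C\<alpha> where C\<alpha>0: "C\<alpha> \<ge> 0" and C\<alpha>: "\<forall>u::'a \<Rightarrow> real. u \<in> borel_measurable lborel \<and> (\<integral>\<^sup>+x. ennreal ((u x)\<^sup>2) \<partial>lborel) \<le> ennreal a
     \<and> gagliardo_nn s1 u < \<infinity>
     \<longrightarrow> (\<integral>\<^sup>+x. ennreal (\<bar>u x\<bar> powr \<alpha>) \<partial>lborel) \<le> ennreal (C\<alpha> * gagliardo s1 u powr (real DIM('a) * (\<alpha> - 2) / (4 * s1)))"
    using GN[OF s_range(1) sD al2 aQ, of a] a_pos by auto
  obtain C\<beta> where C\<beta>0: "C\<beta> \<ge> 0" and C\<beta>: "\<forall>u::'a \<Rightarrow> real. u \<in> borel_measurable lborel \<and> (\<integral>\<^sup>+x. ennreal ((u x)\<^sup>2) \<partial>lborel) \<le> ennreal a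
     \<and> gagliardo_nn s1 u < \<infinity>
     \<longrightarrow> (\<integral>\<^sup>+x. ennreal (\<bar>u x\<bar> powr \<beta>) \<partial>lborel) \<le> ennreal (C\<beta> * gagliardo s1 u powr (real DIM('a) * (\<beta> - 2) / (4 * s1)))"
    using GN[OF s_range(1) sD be2 bQ, of a] a_pos by auto
  define \<theta>a where "\<theta>a = d * (\<alpha> - 2) / (4 * s1)"
  define \<theta>b where "\<theta>b = d * (\<beta> - 2) / (4 * s1)"
  have \<theta>a1: "\<theta>a > 1"
  proof -
    have "4 * s1 / d < \<alpha> - 2" using a2 by simp
    then have "4 * s1 < d * (\<alpha> - 2)" using d0 by (simp add: field_simps)
    then show ?thesis unfolding \<theta>a_def using s_range by simp
  qed
  have \<theta>ab: "\<theta>a \<le> \<theta>b" unfolding \<theta>a_def \<theta>b_def using G2(2) d0 s_range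
    by (intro divide_right_mono mult_left_mono) auto
  define M where "M = Gprim g 1 + Gprim g (-1)"
  have M0: "M \<ge> 0" unfolding M_def using G_nonneg[OF G1(1) G2(4) G2(2)] by (simp add: add_nonneg_nonneg)
  define K where "K = (\<beta> / 2 - 1) * M"
  have K0: "K \<ge> 0" unfolding K_def using be2 M0 by simp
  have Gt: "Gtil g y \<le> K * (\<bar>y\<bar> powr \<alpha> + \<bar>y\<bar> powr \<beta>)" for y
  proof -
    have "Gtil g y \<le> (\<beta>/2 - 1) * Gprim g y" by (rule Gtil_le[OF G1(1) G2(4) G2(2)])
    also have "\<dots> \<le> (\<beta>/2 - 1) * (M * (\<bar>y\<bar> powr \<alpha> + \<bar>y\<bar> powr \<beta>))"
      unfolding M_def using be2 G_le[OF G1(1) G2(4) G2(2), of y] by (intro mult_left_mono) auto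
    finally show ?thesis unfolding K_def by (simp add: mult.assoc)
  qed
  define L where "L = d * K * (C\<alpha> + C\<beta>)"
  have L0: "L \<ge> 0" unfolding L_def using d0 K0 C\<alpha>0 C\<beta>0 by simp
  define \<epsilon> where "\<epsilon> = (s1 - \<sigma>2) / (L + 1)"
  have \<epsilon>0: "\<epsilon> > 0" unfolding \<epsilon>_def using s1\<sigma> L0 by simp
  define \<delta>0 where "\<delta>0 = min 1 (\<epsilon> powr (1 / (\<theta>a - 1)))"
  have \<delta>00: "\<delta>0 > 0" and \<delta>01: "\<delta>0 \<le> 1" unfolding \<delta>0_def using \<epsilon>0 by auto
  
  have core: "\<delta>0 \<le> gagliardo s1 u + gagliardo s2 u" if uP: "u \<in> P_set s1 s2 gradV g a" for u
  proof -
    have inH: "in_H s1 s2 u" and L2a: "L2sq u = a" and P0: "Pfun s1 s2 gradV g u = 0"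
      using uP unfolding P_set_def S_set_def by auto
    have u[measurable]: "u \<in> borel_measurable lborel" and intu: "integrable lborel (\<lambda>x. (u x)\<^sup>2)"
      and g1fin: "gagliardo_nn s1 u < \<infinity>" using inH unfolding in_H_def by auto
    have nnL2: "(\<integral>\<^sup>+x. ennreal ((u x)\<^sup>2) \<partial>lborel) = ennreal a"
      using L2a intu unfolding L2sq_def by (subst nn_integral_eq_integral) auto
    define A where "A = gagliardo s1 u"
    define B where "B = gagliardo s2 u"
    define S where "S = A + B"
    have A0: "A \<ge> 0" and B0: "B \<ge> 0" unfolding A_def B_def gagliardo_def by auto
    have bA: "(\<integral>\<^sup>+x. ennreal (\<bar>u x\<bar> powr \<alpha>) \<partial>lborel) \<le> ennreal (C\<alpha> * A powr \<theta>a)"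
      using C\<alpha> u nnL2 g1fin unfolding A_def \<theta>a_def d_def by auto
    have bB: "(\<integral>\<^sup>+x. ennreal (\<bar>u x\<bar> powr \<beta>) \<partial>lborel) \<le> ennreal (C\<beta> * A powr \<theta>b)"
      using C\<beta> u nnL2 g1fin unfolding A_def \<theta>b_def d_def by auto
    have iA: "integrable lborel (\<lambda>x. \<bar>u x\<bar> powr \<alpha>)" and rA: "(\<integral>x. \<bar>u x\<bar> powr \<alpha> \<partial>lborel) \<le> C\<alpha> * A powr \<theta>a"
      using Lp_real_bound[OF u bA] C\<alpha>0 by auto
    have iB: "integrable lborel (\<lambda>x. \<bar>u x\<bar> powr \<beta>)" and rB: "(\<integral>x. \<bar>u x\<bar> powr \<beta> \<partial>lborel) \<le> C\<beta> * A powr \<theta>b"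
      using Lp_real_bound[OF u bB] C\<beta>0 by auto
    have Gint: "(\<integral>x. Gtil g (u x) \<partial>lborel) \<le> K * (C\<alpha> * A powr \<theta>a + C\<beta> * A powr \<theta>b)"
    proof -
      have "(\<integral>x. Gtil g (u x) \<partial>lborel) \<le> (\<integral>x. K * (\<bar>u x\<bar> powr \<alpha> + \<bar>u x\<bar> powr \<beta>) \<partial>lborel)"
        by (rule integral_mono') (use iA iB Gt K0 in auto)
      also have "\<dots> = K * ((\<integral>x. \<bar>u x\<bar> powr \<alpha> \<partial>lborel) + (\<integral>x. \<bar>u x\<bar> powr \<beta> \<partial>lborel))"
        using iA iB by simp
      also have "\<dots> \<le> K * (C\<alpha> * A powr \<theta>a + C\<beta> * A powr \<theta>b)"
        using rA rB K0 by (intro mult_left_mono) auto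
      finally show ?thesis .
    qed
    have Vint: "1/2 * (\<integral>x. (gradV x \<bullet> x) * (u x)\<^sup>2 \<partial>lborel) \<ge> - \<sigma>2 * S"
    proof -
      have "(\<lambda>x. 1/2 * (gradV x \<bullet> x) * (u x)\<^sup>2) = (\<lambda>x. 1/2 * ((gradV x \<bullet> x) * (u x)\<^sup>2))"
        by (simp add: mult.assoc)
      then have "(\<integral>x. 1/2 * (gradV x \<bullet> x) * (u x)\<^sup>2 \<partial>lborel) = 1/2 * (\<integral>x. (gradV x \<bullet> x) * (u x)\<^sup>2 \<partial>lborel)"
        by simp
      then show ?thesis using Vb[OF inH] unfolding S_def A_def B_def by linarith
    qed
    have main: "(s1 - \<sigma>2) * S \<le> d * K * (C\<alpha> * A powr \<theta>a + C\<beta> * A powr \<theta>b)"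
    proof -
      have "s1 * S \<le> s1 * A + s2 * B" unfolding S_def using s_range B0 mult_left_mono[of s1 s2 B] by (simp add: algebra_simps)
      also have "s1 * A + s2 * B = 1/2 * (\<integral>x. (gradV x \<bullet> x) * (u x)\<^sup>2 \<partial>lborel) + d * (\<integral>x. Gtil g (u x) \<partial>lborel)"
        using P0 unfolding Pfun_def A_def B_def d_def by simp
      finally have "s1 * S \<le> 1/2 * (\<integral>x. (gradV x \<bullet> x) * (u x)\<^sup>2 \<partial>lborel) + d * (\<integral>x. Gtil g (u x) \<partial>lborel)" .
      moreover have "1/2 * (\<integral>x. (gradV x \<bullet> x) * (u x)\<^sup>2 \<partial>lborel) \<le> \<sigma>2 * S"
      proof -
        have "(\<lambda>x. 1/2 * (gradV x \<bullet> x) * (u x)\<^sup>2) = (\<lambda>x. 1/2 * ((gradV x \<bullet> x) * (u x)\<^sup>2))"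
          by (simp add: mult.assoc)
        then have "(\<integral>x. 1/2 * (gradV x \<bullet> x) * (u x)\<^sup>2 \<partial>lborel) = 1/2 * (\<integral>x. (gradV x \<bullet> x) * (u x)\<^sup>2 \<partial>lborel)"
          by simp
        then show ?thesis using Vb[OF inH] unfolding S_def A_def B_def by linarith
      qed
      moreover have "d * (\<integral>x. Gtil g (u x) \<partial>lborel) \<le> d * (K * (C\<alpha> * A powr \<theta>a + C\<beta> * A powr \<theta>b))"
        using Gint d0 by (intro mult_left_mono) auto
      ultimately show ?thesis by (simp add: algebra_simps)
    qed
    show ?thesis
    proof (cases "S < 1")
      case False then show ?thesis using \<delta>01 unfolding S_def A_def B_def by simp
    next
      case True
      have AS: "A \<le> S" unfolding S_def using B0 by simp
      show ?thesis
      proof (cases "S = 0")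
        case True
        then have "A = 0" using A0 B0 unfolding S_def by simp
        then have "(\<integral>\<^sup>+x. ennreal (\<bar>u x\<bar> powr \<alpha>) \<partial>lborel) = 0" using bA by simp
        then have "AE x in lborel. ennreal (\<bar>u x\<bar> powr \<alpha>) = 0"
          by (subst (asm) nn_integral_0_iff_AE) auto
        then have AEz: "AE x in lborel. (u x)\<^sup>2 = 0" by eventually_elim simp
        have "(\<integral>x. (u x)\<^sup>2 \<partial>lborel) = (\<integral>x. 0 \<partial>(lborel :: 'a measure))"
          by (rule integral_cong_AE[OF _ _ AEz]; measurable)
        then have "a = 0" using L2a unfolding L2sq_def by simp
        then show ?thesis using a_pos by simp
      next
        case False
        then have S0: "S > 0" using A0 B0 unfolding S_def by simp
        have "C\<alpha> * A powr \<theta>a + C\<beta> * A powr \<theta>b \<le> C\<alpha> * S powr \<theta>a + C\<beta> * S powr \<theta>a"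
        proof (intro add_mono mult_left_mono)
          show "A powr \<theta>a \<le> S powr \<theta>a" using AS A0 \<theta>a1 by (intro powr_mono2) auto
          have "A powr \<theta>b \<le> A powr \<theta>a" using \<theta>ab A0 AS True by (intro powr_mono') auto
          also have "\<dots> \<le> S powr \<theta>a" using AS A0 \<theta>a1 by (intro powr_mono2) auto
          finally show "A powr \<theta>b \<le> S powr \<theta>a" .
        qed (use C\<alpha>0 C\<beta>0 in auto)
        then have "d * K * (C\<alpha> * A powr \<theta>a + C\<beta> * A powr \<theta>b) \<le> d * K * (C\<alpha> * S powr \<theta>a + C\<beta> * S powr \<theta>a)"
          using d0 K0 by (intro mult_left_mono) auto
        also have "d * K * (C\<alpha> * S powr \<theta>a + C\<beta> * S powr \<theta>a) = L * S powr \<theta>a"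
          unfolding L_def by (simp add: algebra_simps)
        finally have "(s1 - \<sigma>2) * S \<le> L * S powr \<theta>a" using main by linarith
        also have "\<dots> \<le> (L + 1) * S powr \<theta>a" by (simp add: algebra_simps)
        finally have "(s1 - \<sigma>2) * S \<le> (L + 1) * S powr \<theta>a" .
        moreover have "S powr \<theta>a = S * S powr (\<theta>a - 1)" using S0 by (simp add: powr_diff)
        ultimately have "S * (s1 - \<sigma>2) \<le> S * ((L + 1) * S powr (\<theta>a - 1))" by (simp add: algebra_simps)
        then have "(s1 - \<sigma>2) \<le> (L + 1) * S powr (\<theta>a - 1)" using S0 mult_le_cancel_left_pos by blast
        then have "\<epsilon> \<le> S powr (\<theta>a - 1)" unfolding \<epsilon>_def using L0 by (simp add: field_simps)
        then have "\<epsilon> powr (1 / (\<theta>a - 1)) \<le> (S powr (\<theta>a - 1)) powr (1 / (\<theta>a - 1))"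
          using \<epsilon>0 \<theta>a1 by (intro powr_mono2) auto
        also have "\<dots> = S" using S0 \<theta>a1 by (simp add: powr_powr)
        finally show ?thesis unfolding \<delta>0_def S_def A_def B_def by simp
      qed
    qed
  qed
  define \<delta> where "\<delta> = \<delta>0 powr (1 / (2 * s1))"
  have \<delta>0': "\<delta> > 0" unfolding \<delta>_def using \<delta>00 by simp
  have \<delta>sq: "\<delta>\<^sup>2 \<le> \<delta>0"
  proof -
    have "\<delta>\<^sup>2 = \<delta>0 powr (1 / s1)" unfolding \<delta>_def using \<delta>00 s_range
      by (simp add: powr_powr[symmetric] powr_numeral[symmetric] powr_powr)
    also have "\<dots> \<le> \<delta>0 powr 1" using \<delta>00 \<delta>01 s_range by (intro powr_mono') (auto simp: field_simps)
    finally show ?thesis using \<delta>00 by simp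
  qed
  have \<delta>1: "\<delta> \<le> 1" unfolding \<delta>_def using \<delta>00 \<delta>01 s_range powr_mono2[of "1 / (2 * s1)" \<delta>0 1] by simp
  show ?thesis
  proof (rule exI[of _ \<delta>], intro conjI allI impI ballI \<delta>0')
    fix u assume "u \<in> P_set s1 s2 gradV g a"
    then show "\<delta>\<^sup>2 \<le> gagliardo s1 u + gagliardo s2 u" using core \<delta>sq by fastforce
  next
    fix t u
    assume H: "0 < t \<and> u \<in> S_set s1 s2 a \<and> gagliardo s1 u + gagliardo s2 u = 1 \<and> dil t u \<in> P_set s1 s2 gradV g a"
    then have t: "t > 0" and uS: "u \<in> S_set s1 s2 a" and one: "gagliardo s1 u + gagliardo s2 u = 1"
      and dP: "dil t u \<in> P_set s1 s2 gradV g a" by auto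
    have u[measurable]: "u \<in> borel_measurable lborel" using uS unfolding S_set_def in_H_def by auto
    have gs: "gagliardo s (dil t u) = t powr (2 * s) * gagliardo s u" for s
      unfolding gagliardo_def gag_scale[OF u t] using t by (simp add: enn2real_mult)
    have low: "\<delta>0 \<le> t powr (2 * s1) * gagliardo s1 u + t powr (2 * s2) * gagliardo s2 u"
      using core[OF dP] gs by simp
    show "\<delta> \<le> t"
    proof (cases "t \<ge> 1")
      case True then show ?thesis using \<delta>1 by simp
    next
      case False
      have g1: "gagliardo s1 u \<ge> 0" and g2: "gagliardo s2 u \<ge> 0" unfolding gagliardo_def by auto
      have "t powr (2 * s2) \<le> t powr (2 * s1)" using False t s_range by (intro powr_mono') auto
      then have "t powr (2 * s2) * gagliardo s2 u \<le> t powr (2 * s1) * gagliardo s2 u"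
        using g2 by (intro mult_right_mono) auto
      moreover have "t powr (2 * s1) * gagliardo s1 u + t powr (2 * s1) * gagliardo s2 u = t powr (2 * s1)"
        using one by (simp add: distrib_left[symmetric])
      ultimately have "\<delta>0 \<le> t powr (2 * s1)" using low by linarith
      then have "\<delta>0 powr (1 / (2 * s1)) \<le> (t powr (2 * s1)) powr (1 / (2 * s1))"
        using \<delta>00 s_range by (intro powr_mono2) auto
      also have "\<dots> = t" using t s_range by (simp add: powr_powr)
      finally show ?thesis unfolding \<delta>_def .
    qed
  qed
qed


end
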